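(* Let $y_0\in E$ and suppose: (A1) $\eta>0$ on $[y_0,\infty)$ and $\eta\in C^2([y_0,\infty))$; (A2) $b^2/\eta$, $\tilde a/\eta$, $\eta'/\eta$ are bounded on $[y_0,\infty)$; (A3) $\Psi\eta(y)\to1$ as $y\to\infty$. Let $u$ be a solution of $0=\tfrac12b^2u''+\tilde au'+\eta u-u^2-d\frac{(u')^2}{u}$ on $[y_0,\infty)$ with $C_1\eta\le u\le C_2\eta$ there for some $0<C_1<C_2$. Assume that there are constants $K_1,K_2\neq0$ with $\frac{\tilde a}{\eta}+(b^2-2d)\frac{\eta'}{\eta^2}\to K_1$ and $\frac d\eta\to K_2$ as $y\to\infty$, and that $\eta'(y)/\eta(y)\to0$ as $y\to\infty$. Then $u'(y)/u(y)\to0$ as $y\to\infty$.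
   Context: $E=(E_-,\infty)$ with $E_-\in\{-\infty\}\cup\mathbb R$. $r,\lambda,\sigma,a,b,\rho,\delta:E\to\mathbb R$ are locally Lipschitz with $\sigma>0$, $b(y)\neq0$, $\rho(y)\in[-1,1]$; $R\in(0,\infty)\setminus\{1\}$. Define $\eta=\frac1R\big(\delta-(1-R)(r+\frac{\lambda^2}{2R})\big)$, $\tilde a=a+\frac{1-R}{R}\rho\lambda b$, $d=\frac12b^2((1-\rho^2)R+\rho^2+1)$, and for positive $g\in C^2$, $\Psi g=1+\frac{\frac12b^2g''+\tilde ag'}{g^2}-d\frac{(g')^2}{g^3}$. *)

theory Defs
  imports "HOL-Analysis.Analysis"
begin

definition loc_lip_on :: "real set \<Rightarrow> (real \<Rightarrow> real) \<Rightarrow> bool" where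
  "loc_lip_on E f \<longleftrightarrow> (\<forall>x\<in>E. \<exists>e>0. \<exists>C. C-lipschitz_on (cball x e \<inter> E) f)"

definition eta_fun :: "real \<Rightarrow> (real \<Rightarrow> real) \<Rightarrow> (real \<Rightarrow> real) \<Rightarrow> (real \<Rightarrow> real) \<Rightarrow> real \<Rightarrow> real" where
  "eta_fun R r lam delta y = (1 / R) * (delta y - (1 - R) * (r y + (lam y)^2 / (2 * R)))"

definition atilde_fun :: "real \<Rightarrow> (real \<Rightarrow> real) \<Rightarrow> (real \<Rightarrow> real) \<Rightarrow> (real \<Rightarrow> real) \<Rightarrow> (real \<Rightarrow> real) \<Rightarrow> real \<Rightarrow> real" where
  "atilde_fun R a rho lam b y = a y + (1 - R) / R * rho y * lam y * b y"

definition d_fun :: "real \<Rightarrow> (real \<Rightarrow> real) \<Rightarrow> (real \<Rightarrow> real) \<Rightarrow> real \<Rightarrow> real" where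
  "d_fun R b rho y = (1/2) * (b y)^2 * ((1 - (rho y)^2) * R + (rho y)^2 + 1)"

text \<open>Psi g at y, given the values g = g(y), g1 = g'(y), g2 = g''(y) and coefficients.\<close>
definition Psi_val :: "real \<Rightarrow> real \<Rightarrow> real \<Rightarrow> real \<Rightarrow> real \<Rightarrow> real \<Rightarrow> real" where
  "Psi_val bb aa dd g g1 g2 = 1 + ((1/2) * bb^2 * g2 + aa * g1) / g^2 - dd * g1^2 / g^3"

end

theory Submission
  imports Defs "HOL-Library.Liminf_Limsup"
begin

lemma alg:
  fixes B U U1 U2 Eh E1 E2 A D Ps :: real
  assumes "B \<noteq> 0" "U > 0" "Eh > 0"
    "0 = 1/2*B^2*U2 + A*U1 + Eh*U - U^2 - D*U1^2/U"
    "Ps = 1 + (1/2*B^2*E2 + A*E1)/Eh^2 - D*E1^2/Eh^3"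
  shows "(U2*U - U1^2)/U^2 - (E2*Eh - E1^2)/Eh^2 = 2*Eh/B^2 * ((D - B^2/2)/Eh * (U1/U - E1/Eh)^2 - (A/Eh + (B^2 - 2*D)*E1/Eh^2) * (U1/U - E1/Eh) + (U/Eh - Ps))"
proof -
  define vv where "vv = U1/U"
  define qq where "qq = E1/Eh"
  have U1: "U1 = vv*U" using assms(2) by (simp add: vv_def)
  have E1: "E1 = qq*Eh" using assms(3) by (simp add: qq_def)
  have u2: "U2/U = 2/B^2 * (- A* vv - Eh + U + D* vv^2)"
    using assms(1,2,4) unfolding U1 by (simp add: field_simps power2_eq_square)
  have e2a: "Eh * (B^2*E2 + 2*Eh^2 + 2*A*Eh*qq) = Eh * (2*Eh^2*Ps + 2*D*Eh*qq^2)"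
    using assms(3,5) unfolding E1 by (simp add: field_simps power2_eq_square power3_eq_cube)
  then have e2b: "B^2*E2 + 2*Eh^2 + 2*A*Eh*qq = 2*Eh^2*Ps + 2*D*Eh*qq^2" using assms(3) by simp
  have e2: "E2/Eh = 2/B^2 * (Eh*(Ps - 1) + D*qq^2 - A*qq)"
    using assms(1,3) e2b by (simp add: field_simps power2_eq_square)
  have l: "(U2*U - U1^2)/U^2 - (E2*Eh - E1^2)/Eh^2 = U2/U - vv^2 - E2/Eh + qq^2"
    using assms(2,3) unfolding U1 E1 by (simp add: field_simps power2_eq_square)
  have r: "2*Eh/B^2 * ((D - B^2/2)/Eh * (U1/U - E1/Eh)^2 - (A/Eh + (B^2 - 2*D)*E1/Eh^2) * (U1/U - E1/Eh) + (U/Eh - Ps))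
     = 2/B^2 * ((D - B^2/2)*(vv-qq)^2 - A*(vv-qq) - (B^2 - 2*D)*qq*(vv-qq) + U - Eh*Ps)"
    using assms(1,2,3) unfolding vv_def[symmetric] qq_def[symmetric] E1 by (simp add: field_simps power2_eq_square)
  show ?thesis unfolding l r u2 e2 using assms(1) by (simp add: field_simps power2_eq_square)
qed



lemma trap_fwd:
  fixes f f' :: "real \<Rightarrow> real"
  assumes ab: "a \<le> b" and d: "\<forall>x\<in>{a..b}. (f has_real_derivative f' x) (at x)"
    and fa: "c \<le> f a" and pos: "\<forall>x\<in>{a..b}. c \<le> f x \<longrightarrow> f' x > 0"
  shows "c \<le> f b"
proof (rule ccontr)
  assume nb: "\<not> c \<le> f b"
  have cont: "continuous_on {a..b} f"
    using d by (meson DERIV_isCont continuous_at_imp_continuous_on)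
  define S where "S = {a..b} \<inter> f -` {c..}"
  have cS: "closed S" unfolding S_def by (rule continuous_closed_preimage[OF cont]) auto
  have aS: "a \<in> S" using ab fa by (auto simp: S_def)
  have bdd: "bdd_above S" unfolding S_def by (rule bdd_aboveI[of _ b]) auto
  define s where "s = Sup S"
  have sS: "s \<in> S" unfolding s_def using closed_contains_Sup[OF _ bdd cS] aS by blast
  have sb: "s < b" using sS nb by (auto simp: S_def less_le)
  have fs: "c \<le> f s" "a \<le> s" using sS by (auto simp: S_def)
  have "f' s > 0" using pos fs sb by auto
  moreover have "(f has_real_derivative f' s) (at s)" using d fs sb by auto
  ultimately obtain dd where dd: "dd > 0" "\<forall>h>0. h < dd \<longrightarrow> f s < f (s + h)"
    using DERIV_pos_inc_right by blast
  define h where "h = min dd (b - s) / 2"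
  have h: "h > 0" "h < dd" "s + h \<le> b" using dd sb min.cobounded1[of dd "b - s"] min.cobounded2[of dd "b - s"] unfolding h_def by (auto simp: min_def)
  have "s + h \<in> S" using h dd fs by (auto simp: S_def)
  then have "s + h \<le> s" unfolding s_def using bdd by (rule cSup_upper)
  then show False using h by simp
qed

lemma trap_bwd:
  fixes f f' :: "real \<Rightarrow> real"
  assumes ab: "a \<le> b" and d: "\<forall>x\<in>{a..b}. (f has_real_derivative f' x) (at x)"
    and fb: "f b \<le> c" and pos: "\<forall>x\<in>{a..b}. f x \<le> c \<longrightarrow> f' x > 0"
  shows "f a \<le> c"
proof (rule ccontr)
  assume na: "\<not> f a \<le> c"
  have cont: "continuous_on {a..b} f"
    using d by (meson DERIV_isCont continuous_at_imp_continuous_on)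
  define S where "S = {a..b} \<inter> f -` {..c}"
  have cS: "closed S" unfolding S_def by (rule continuous_closed_preimage[OF cont]) auto
  have bS: "b \<in> S" using ab fb by (auto simp: S_def)
  have bdd: "bdd_below S" unfolding S_def by (rule bdd_belowI[of _ a]) auto
  define s where "s = Inf S"
  have sS: "s \<in> S" unfolding s_def using closed_contains_Inf[OF _ bdd cS] bS by blast
  have sa: "a < s" using sS na by (auto simp: S_def less_le)
  have fs: "f s \<le> c" "s \<le> b" using sS by (auto simp: S_def)
  have "f' s > 0" using pos fs sa by auto
  moreover have "(f has_real_derivative f' s) (at s)" using d fs sa by auto
  ultimately obtain dd where dd: "dd > 0" "\<forall>h>0. h < dd \<longrightarrow> f (s - h) < f s"
    using DERIV_pos_inc_left by blast
  define h where "h = min dd (s - a) / 2"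
  have h: "h > 0" "h < dd" "a \<le> s - h" using dd sa min.cobounded1[of dd "s - a"] min.cobounded2[of dd "s - a"] unfolding h_def by (auto simp: min_def)
  have "s - h \<in> S" using h dd fs by (auto simp: S_def)
  then have "s \<le> s - h" unfolding s_def using bdd by (rule cInf_lower)
  then show False using h by simp
qed

lemma int_max:
  fixes l p q :: "real \<Rightarrow> real"
  assumes az: "a < z" and zb: "z < b" and dl: "\<forall>x\<in>{a..b}. (l has_real_derivative p x) (at x)"
    and dp: "\<forall>x\<in>{a..b}. (p has_real_derivative q x) (at x)" and mx: "\<forall>x\<in>{a..b}. l x \<le> l z"
  shows "p z = 0 \<and> q z \<le> 0"
proof -
  have p0: "p z = 0"
  proof (rule DERIV_local_max)
    show "(l has_real_derivative p z) (at z)" using dl az zb by auto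
    show "0 < min (z - a) (b - z)" using az zb by auto
    show "\<forall>y. \<bar>z - y\<bar> < min (z - a) (b - z) \<longrightarrow> l y \<le> l z" using mx by (auto simp: abs_if)
  qed
  have "q z \<le> 0"
  proof (rule ccontr)
    assume "\<not> q z \<le> 0"
    then have "q z > 0" by simp
    moreover have "(p has_real_derivative q z) (at z)" using dp az zb by auto
    ultimately obtain dd where dd: "dd > 0" "\<forall>h>0. h < dd \<longrightarrow> p z < p (z + h)"
      using DERIV_pos_inc_right by blast
    define h where "h = min dd (b - z) / 2"
    have h: "h > 0" "h < dd" "z + h \<le> b" using dd zb min.cobounded1[of dd "b - z"] min.cobounded2[of dd "b - z"] unfolding h_def by (auto simp: min_def)
    obtain xi where xi: "z < xi" "xi < z + h" "l (z + h) - l z = (z + h - z) * p xi"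
      using MVT2[of z "z + h" l p] h dl az by auto
    have "p xi > 0" using dd(2)[rule_format, of "xi - z"] xi h p0 by auto
    then have "l (z + h) > l z" using xi h by (simp add: algebra_simps)
    moreover have "l (z + h) \<le> l z" using mx h az by auto
    ultimately show False by simp
  qed
  with p0 show ?thesis by simp
qed

lemma int_min:
  fixes l p q :: "real \<Rightarrow> real"
  assumes az: "a < z" and zb: "z < b" and dl: "\<forall>x\<in>{a..b}. (l has_real_derivative p x) (at x)"
    and dp: "\<forall>x\<in>{a..b}. (p has_real_derivative q x) (at x)" and mn: "\<forall>x\<in>{a..b}. l z \<le> l x"
  shows "p z = 0 \<and> q z \<ge> 0"
proof -
  have "- p z = 0 \<and> - q z \<le> 0"
  proof (rule int_max[OF az zb])
    show "\<forall>x\<in>{a..b}. ((\<lambda>x. - l x) has_real_derivative - p x) (at x)" using dl by (auto intro: DERIV_minus)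
    show "\<forall>x\<in>{a..b}. ((\<lambda>x. - p x) has_real_derivative - q x) (at x)" using dp by (auto intro: DERIV_minus)
    show "\<forall>x\<in>{a..b}. - l x \<le> - l z" using mn by auto
  qed
  then show ?thesis by simp
qed

lemma barbalat:
  fixes l p q :: "real \<Rightarrow> real"
  assumes dl: "\<forall>x\<ge>T. (l has_real_derivative p x) (at x)"
    and dp: "\<forall>x\<ge>T. (p has_real_derivative q x) (at x)"
    and qb: "\<forall>x\<ge>T. \<bar>q x\<bar> \<le> Lq" and lim: "(l \<longlongrightarrow> L) at_top"
  shows "(p \<longlongrightarrow> 0) at_top"
proof (rule tendstoI)
  fix e :: real assume e: "e > 0"
  define Lq' where "Lq' = \<bar>Lq\<bar> + 1"
  have Lq': "Lq' > 0" "Lq \<le> Lq'" by (auto simp: Lq'_def)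
  define dl0 where "dl0 = e / (2 * Lq')"
  have dl0: "dl0 > 0" using e Lq' by (simp add: dl0_def)
  have "eventually (\<lambda>x. dist (l x) L < e * dl0 / 4) at_top"
    using tendstoD[OF lim, of "e * dl0 / 4"] e dl0 by simp
  then obtain N where N: "\<forall>x\<ge>N. dist (l x) L < e * dl0 / 4"
    by (auto simp: eventually_at_top_linorder)
  show "eventually (\<lambda>x. dist (p x) 0 < e) at_top"
    unfolding eventually_at_top_linorder
  proof (intro exI[of _ "max N T"] allI impI)
    fix t assume t: "t \<ge> max N T"
    have A: "\<bar>l t - L\<bar> < e * dl0 / 4" "\<bar>l (t + dl0) - L\<bar> < e * dl0 / 4"
      using N[rule_format, of t] N[rule_format, of "t + dl0"] t dl0 by (auto simp: dist_real_def)
    moreover have "\<bar>l (t + dl0) - l t\<bar> \<le> \<bar>l (t + dl0) - L\<bar> + \<bar>l t - L\<bar>"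
      using abs_triangle_ineq4[of "l (t + dl0) - L" "l t - L"] by simp
    ultimately have "\<bar>l (t + dl0) - l t\<bar> < e * dl0 / 2" by linarith
    moreover obtain xi where xi: "t < xi" "xi < t + dl0" "l (t + dl0) - l t = (t + dl0 - t) * p xi"
      using MVT2[of t "t + dl0" l p] dl t dl0 by auto
    ultimately have "\<bar>dl0 * p xi\<bar> < e * dl0 / 2" by simp
    then have pxi: "\<bar>p xi\<bar> < e / 2" using dl0 by (simp add: abs_mult)
    obtain zt where zt: "t < zt" "zt < xi" "p xi - p t = (xi - t) * q zt"
      using MVT2[of t xi p q] dp t xi by auto
    have "\<bar>q zt\<bar> \<le> Lq'" using qb[rule_format, of zt] zt t Lq' by auto
    then have "\<bar>(xi - t) * q zt\<bar> \<le> dl0 * Lq'" using xi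
      by (auto simp: abs_mult intro!: mult_mono)
    also have "dl0 * Lq' = e / 2" using Lq' by (simp add: dl0_def)
    finally have "\<bar>p xi - p t\<bar> \<le> e / 2" using zt by simp
    moreover have "\<bar>p t\<bar> \<le> \<bar>p xi - p t\<bar> + \<bar>p xi\<bar>"
      using abs_triangle_ineq4[of "p xi" "p xi - p t"] by simp
    ultimately show "dist (p t) 0 < e" using pxi by (simp add: dist_real_def)
  qed
qed



lemma osc_conv:
  fixes w :: "real \<Rightarrow> real"
  assumes bd: "\<forall>t\<ge>T0. C1 \<le> w t \<and> w t \<le> C2"
    and quasi: "\<forall>\<epsilon>>0. \<exists>T. \<forall>a x b. T \<le> a \<longrightarrow> a < x \<longrightarrow> x < b \<longrightarrow>
        w x \<le> max (w a) (max (w b) (1 + \<epsilon>)) \<and> min (w a) (min (w b) (1 - \<epsilon>)) \<le> w x"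
  shows "\<exists>L. (w \<longlongrightarrow> L) at_top"
proof -
  define M where "M = Limsup at_top (\<lambda>t. ereal (w t))"
  define m where "m = Liminf at_top (\<lambda>t. ereal (w t))"
  have evb: "eventually (\<lambda>t. C1 \<le> w t \<and> w t \<le> C2) at_top"
    using bd by (auto simp: eventually_at_top_linorder)
  have M_le: "M \<le> ereal C2" unfolding M_def
    by (rule Limsup_bounded) (use evb in \<open>auto elim: eventually_mono\<close>)
  have m_ge: "ereal C1 \<le> m" unfolding m_def
    by (rule Liminf_bounded) (use evb in \<open>auto elim: eventually_mono\<close>)
  have mM: "m \<le> M" unfolding m_def M_def by (rule Liminf_le_Limsup) simp
  obtain M' where M': "M = ereal M'" using M_le mM m_ge by (cases M) auto
  obtain m' where m': "m = ereal m'" using M_le mM m_ge by (cases m) auto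
  show ?thesis
  proof (cases "m' < M'")
    case False
    with mM M' m' have "m' = M'" by auto
    then have "((\<lambda>t. ereal (w t)) \<longlongrightarrow> ereal M') at_top"
      using M' m' unfolding M_def m_def by (intro Liminf_eq_Limsup) auto
    then show ?thesis by auto
  next
    case True
    define d where "d = (M' - m') / 4"
    have d: "d > 0" using True by (simp add: d_def)
    obtain T where T: "\<forall>a x b. T \<le> a \<longrightarrow> a < x \<longrightarrow> x < b \<longrightarrow>
        w x \<le> max (w a) (max (w b) (1 + d)) \<and> min (w a) (min (w b) (1 - d)) \<le> w x"
      using quasi d by blast
    have hi: "\<exists>x\<ge>S. w x > M' - d" for S
    proof (rule ccontr)
      assume "\<not> (\<exists>x\<ge>S. w x > M' - d)"
      then have "eventually (\<lambda>x. ereal (w x) \<le> ereal (M' - d)) at_top"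
        by (auto simp: eventually_at_top_linorder not_less)
      then have "M \<le> ereal (M' - d)" unfolding M_def by (rule Limsup_bounded)
      then show False using M' d by simp
    qed
    have lo: "\<exists>x\<ge>S. w x < m' + d" for S
    proof (rule ccontr)
      assume "\<not> (\<exists>x\<ge>S. w x < m' + d)"
      then have "eventually (\<lambda>x. ereal (m' + d) \<le> ereal (w x)) at_top"
        by (auto simp: eventually_at_top_linorder not_less)
      then have "ereal (m' + d) \<le> m" unfolding m_def by (rule Liminf_bounded)
      then show False using m' d by simp
    qed
    have gap: "m' + d < M' - d" using True unfolding d_def by (simp add: field_simps)
    obtain a1 where a1: "a1 \<ge> T" "w a1 < m' + d" using lo by blast
    obtain x1 where x1: "x1 \<ge> a1 + 1" "w x1 > M' - d" using hi by blast
    obtain b1 where b1: "b1 \<ge> x1 + 1" "w b1 < m' + d" using lo by blast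
    have "w x1 \<le> max (w a1) (max (w b1) (1 + d))" using T a1 x1 b1 by auto
    then have up: "M' - d < 1 + d" using a1 x1 b1 gap by (auto simp: max_def split: if_splits)
    obtain a2 where a2: "a2 \<ge> T" "w a2 > M' - d" using hi by blast
    obtain x2 where x2: "x2 \<ge> a2 + 1" "w x2 < m' + d" using lo by blast
    obtain b2 where b2: "b2 \<ge> x2 + 1" "w b2 > M' - d" using hi by blast
    have "min (w a2) (min (w b2) (1 - d)) \<le> w x2" using T a2 x2 b2 by auto
    then have dn: "1 - d < m' + d" using a2 x2 b2 gap by (auto simp: min_def split: if_splits)
    from up dn have "M' - m' < 4 * d" by linarith
    then show ?thesis by (simp add: d_def)
  qed
qed



lemma cc_bounds:
  fixes R s :: real
  assumes "R > 0" "0 \<le> s" "s \<le> 1"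
  shows "1 + min R 1 \<le> (1 - s) * R + s + 1 \<and> (1 - s) * R + s + 1 \<le> R + 2"
proof (cases "R \<le> 1")
  case True
  have "0 \<le> s * (1 - R)" using assms True by simp
  moreover have "0 \<le> s * R" using assms by simp
  moreover have "0 \<le> R * s" using assms by simp
  ultimately show ?thesis using True assms by (simp add: min_def algebra_simps) (use mult_nonneg_nonneg[of R s] assms in linarith)
next
  case False
  have "0 \<le> (1 - s) * (R - 1)" using assms False by simp
  moreover have "0 \<le> s * R" using assms by simp
  ultimately show ?thesis using False assms by (simp add: min_def algebra_simps) (use mult_nonneg_nonneg[of R s] assms in linarith)
qed

lemma coeff_bounds:
  fixes e bb c dd K2 R mR :: real
  assumes e: "e > 0" and bb: "bb \<noteq> 0" and c1: "1 + mR \<le> c" and c2: "c \<le> R + 2" and R: "R > 0"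
    and mR: "mR > 0" and K2: "K2 > 0" and lo: "K2 / 2 < dd / e" and dd: "dd = 1/2 * bb^2 * c"
  shows "2 * e / bb^2 > 0" "2 * e / bb^2 \<le> 2 * (R + 2) / K2"
    "K2 / (R + 2) * mR / 2 \<le> (dd - bb^2/2) / e" "(dd - bb^2/2) / e \<le> dd / e"
proof -
  define B where "B = bb^2 / e"
  have Bpos: "B > 0" using e bb by (simp add: B_def)
  have dde: "dd / e = 1/2 * B * c" by (simp add: dd B_def)
  have "K2 < B * c" using lo dde by simp
  also have "B * c \<le> B * (R + 2)" using Bpos c2 by simp
  finally have KB: "K2 < B * (R + 2)" .
  have KB': "K2 / (R + 2) < B" using KB R by (simp add: field_simps)
  show "2 * e / bb^2 > 0" using e bb by simp
  have "2 * e / bb^2 = 2 / B" by (simp add: B_def)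
  also have "2 / B \<le> 2 * (R + 2) / K2" using KB Bpos K2 R by (simp add: field_simps)
  finally show "2 * e / bb^2 \<le> 2 * (R + 2) / K2" .
  have be: "(dd - bb^2/2) / e = 1/2 * B * (c - 1)" using e by (simp add: dd B_def field_simps)
  have "K2 / (R + 2) * mR \<le> B * (c - 1)"
    using mult_mono[of "K2 / (R + 2)" B mR "c - 1"] KB' c1 Bpos mR K2 R by simp
  then have "K2 / (R + 2) * mR / 2 \<le> (B * (c - 1)) / 2" by (rule divide_right_mono) simp
  also have "(B * (c - 1)) / 2 = (dd - bb^2/2) / e" using be by simp
  finally show "K2 / (R + 2) * mR / 2 \<le> (dd - bb^2/2) / e" .
  show "(dd - bb^2/2) / e \<le> dd / e" using e by (simp add: divide_right_mono)
qed

lemma Q_pos: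
  fixes bb kk z x b0 K W :: real
  assumes b0: "b0 > 0" "b0 \<le> bb" and kk: "\<bar>kk\<bar> \<le> K" and z: "\<bar>z\<bar> \<le> W"
    and x: "\<bar>x\<bar> \<ge> (K + W) / b0 + 1" and KW: "K \<ge> 0" "W \<ge> 0"
  shows "bb * x^2 - kk * x + z > 0"
proof -
  have x1: "\<bar>x\<bar> \<ge> 1" using x KW b0 by (smt (verit) divide_nonneg_pos)
  have "b0 * \<bar>x\<bar> \<ge> K + W + b0" using x b0 by (simp add: field_simps)
  then have "b0 * \<bar>x\<bar> * \<bar>x\<bar> \<ge> (K + W + b0) * \<bar>x\<bar>" using x1 by (simp add: mult_right_mono)
  moreover have "(K + W + b0) * \<bar>x\<bar> \<ge> K * \<bar>x\<bar> + W + b0" using x1 KW b0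
    by (simp add: algebra_simps) (smt (verit) mult_left_mono mult.commute mult_cancel_left1)
  moreover have "bb * x^2 \<ge> b0 * \<bar>x\<bar> * \<bar>x\<bar>"
  proof -
    have "b0 * (x * x) \<le> bb * (x * x)" by (rule mult_right_mono) (use b0 in auto)
    then show ?thesis by (simp add: power2_eq_square mult.assoc abs_mult_self_eq)
  qed
  moreover have "\<bar>kk * x\<bar> \<le> K * \<bar>x\<bar>" using kk by (simp add: abs_mult mult_right_mono)
  ultimately show ?thesis using z b0 by (smt (verit))
qed

lemma Q_bound:
  fixes bb kk z x G G1 K W P0 K2 :: real
  assumes G: "0 < G" "G \<le> G1" and bb: "0 \<le> bb" "bb \<le> 2 * K2" and kk: "\<bar>kk\<bar> \<le> K" and z: "\<bar>z\<bar> \<le> W"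
    and x: "\<bar>x\<bar> \<le> P0"
  shows "\<bar>G * (bb * x^2 - kk * x + z)\<bar> \<le> G1 * (2 * K2 * P0^2 + K * P0 + W)"
proof -
  have x2: "x^2 \<le> P0^2" using power_mono[of "\<bar>x\<bar>" P0 2] x by simp
  have "bb * x^2 \<le> 2 * K2 * P0^2" using mult_mono[OF bb(2) x2] bb by simp
  moreover have "\<bar>kk * x\<bar> \<le> K * P0" using mult_mono[OF kk x] order_trans[OF abs_ge_zero kk] by (simp add: abs_mult)
  moreover have "0 \<le> bb * x^2" using bb by simp
  ultimately have Q: "\<bar>bb * x^2 - kk * x + z\<bar> \<le> 2 * K2 * P0^2 + K * P0 + W" using z by (smt (verit))
  have "\<bar>G * (bb * x^2 - kk * x + z)\<bar> = G * \<bar>bb * x^2 - kk * x + z\<bar>" using G by (simp add: abs_mult)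
  also have "\<dots> \<le> G1 * (2 * K2 * P0^2 + K * P0 + W)" using mult_mono[OF G(2) Q] G by simp
  finally show ?thesis .
qed


theorem corollary4p12:
  fixes Em :: ereal and E :: "real set"
    and r lam sigma a b rho delta :: "real \<Rightarrow> real" and R :: real
    and y0 :: real and eta1 eta2 u u1 u2 :: "real \<Rightarrow> real"
    and C1 C2 K1 K2 :: real
  assumes E_def: "E = {y. Em < ereal y}" and Em_fin: "Em \<noteq> \<infinity>"
    and lip: "loc_lip_on E r" "loc_lip_on E lam" "loc_lip_on E sigma" "loc_lip_on E a"
             "loc_lip_on E b" "loc_lip_on E rho" "loc_lip_on E delta"
    and sigma_pos: "\<forall>y\<in>E. sigma y > 0"
    and b_nz: "\<forall>y\<in>E. b y \<noteq> 0"
    and rho_range: "\<forall>y\<in>E. -1 \<le> rho y \<and> rho y \<le> 1"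
    and R_pos: "R > 0" and R_ne1: "R \<noteq> 1"
    and y0E: "y0 \<in> E"
    \<comment> \<open>(A1)\<close>
    and eta_pos: "\<forall>y\<ge>y0. eta_fun R r lam delta y > 0"
    and eta_d1: "\<forall>y\<ge>y0. (eta_fun R r lam delta has_real_derivative eta1 y) (at y within {y0..})"
    and eta_d2: "\<forall>y\<ge>y0. (eta1 has_real_derivative eta2 y) (at y within {y0..})"
    and eta2_cont: "continuous_on {y0..} eta2"
    \<comment> \<open>(A2)\<close>
    and A2: "\<exists>M. \<forall>y\<ge>y0. \<bar>(b y)^2 / eta_fun R r lam delta y\<bar> \<le> M
               \<and> \<bar>atilde_fun R a rho lam b y / eta_fun R r lam delta y\<bar> \<le> M
               \<and> \<bar>eta1 y / eta_fun R r lam delta y\<bar> \<le> M"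
    \<comment> \<open>(A3)\<close>
    and A3: "((\<lambda>y. Psi_val (b y) (atilde_fun R a rho lam b y) (d_fun R b rho y)
                 (eta_fun R r lam delta y) (eta1 y) (eta2 y)) \<longlongrightarrow> 1) at_top"
    \<comment> \<open>u solves the ODE on [y0,\<infinity>)\<close>
    and u_d1: "\<forall>y\<ge>y0. (u has_real_derivative u1 y) (at y within {y0..})"
    and u_d2: "\<forall>y\<ge>y0. (u1 has_real_derivative u2 y) (at y within {y0..})"
    and ode: "\<forall>y\<ge>y0. 0 = (1/2) * (b y)^2 * u2 y + atilde_fun R a rho lam b y * u1 y
                 + eta_fun R r lam delta y * u y - (u y)^2 - d_fun R b rho y * (u1 y)^2 / u y"
    and C_pos: "0 < C1" "C1 < C2"
    and u_bounds: "\<forall>y\<ge>y0. C1 * eta_fun R r lam delta y \<le> u y \<and> u y \<le> C2 * eta_fun R r lam delta y"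
    and K_nz: "K1 \<noteq> 0" "K2 \<noteq> 0"
    and lim1: "((\<lambda>y. atilde_fun R a rho lam b y / eta_fun R r lam delta y
                 + ((b y)^2 - 2 * d_fun R b rho y) * eta1 y / (eta_fun R r lam delta y)^2) \<longlongrightarrow> K1) at_top"
    and lim2: "((\<lambda>y. d_fun R b rho y / eta_fun R r lam delta y) \<longlongrightarrow> K2) at_top"
    and lim3: "((\<lambda>y. eta1 y / eta_fun R r lam delta y) \<longlongrightarrow> 0) at_top"
  shows "((\<lambda>y. u1 y / u y) \<longlongrightarrow> 0) at_top"
proof -
  define e where "e = eta_fun R r lam delta"
  define aa where "aa = atilde_fun R a rho lam b"
  define dd where "dd = d_fun R b rho"
  define Ps where "Ps = (\<lambda>y. Psi_val (b y) (aa y) (dd y) (e y) (eta1 y) (eta2 y))"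
  define w where "w = (\<lambda>y. u y / e y)"
  define l where "l = (\<lambda>y. ln (u y) - ln (e y))"
  define p where "p = (\<lambda>y. u1 y / u y - eta1 y / e y)"
  define q where "q = (\<lambda>y. (u2 y * u y - (u1 y)^2) / (u y)^2 - (eta2 y * e y - (eta1 y)^2) / (e y)^2)"
  define G where "G = (\<lambda>y. 2 * e y / (b y)^2)"
  define be where "be = (\<lambda>y. (dd y - (b y)^2/2) / e y)"
  define k where "k = (\<lambda>y. aa y / e y + ((b y)^2 - 2 * dd y) * eta1 y / (e y)^2)"
  define cc where "cc = (\<lambda>y. (1 - (rho y)^2) * R + (rho y)^2 + 1)"
  have inE: "y \<in> E" if "y \<ge> y0" for y
  proof -
    from y0E have "Em < ereal y0" by (simp add: E_def)
    also have "ereal y0 \<le> ereal y" using that by simp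
    finally show ?thesis by (simp add: E_def)
  qed
  have epos: "e y > 0" if "y \<ge> y0" for y using eta_pos that by (simp add: e_def)
  have ub: "C1 * e y \<le> u y \<and> u y \<le> C2 * e y" if "y \<ge> y0" for y
    using u_bounds that by (simp add: e_def)
  have upos: "u y > 0" if "y \<ge> y0" for y
  proof -
    have "0 < C1 * e y" using C_pos epos[OF that] by simp
    then show ?thesis using ub[OF that] by linarith
  qed
  have wb: "C1 \<le> w y \<and> w y \<le> C2" if "y \<ge> y0" for y
    using ub[OF that] epos[OF that] by (simp add: w_def pos_le_divide_eq pos_divide_le_eq)
  have lw: "l y = ln (w y)" if "y \<ge> y0" for y
    using upos[OF that] epos[OF that] by (simp add: l_def w_def ln_div)
  have lbd: "ln C1 \<le> l y \<and> l y \<le> ln C2" if "y \<ge> y0" for y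
    using wb[OF that] C_pos lw[OF that] by auto
  have bnz: "b y \<noteq> 0" if "y \<ge> y0" for y using b_nz inE[OF that] by auto
  have ccb: "1 + min R 1 \<le> cc y \<and> cc y \<le> R + 2" if "y \<ge> y0" for y
  proof -
    have "\<bar>rho y\<bar> \<le> 1" using rho_range inE[OF that] by auto
    then have "(rho y)^2 \<le> 1" by (simp add: abs_square_le_1)
    then show ?thesis unfolding cc_def using cc_bounds[OF R_pos, of "(rho y)^2"] by simp
  qed
  have dd_eq: "dd y = 1/2 * (b y)^2 * cc y" for y by (simp add: dd_def d_fun_def cc_def)
  have atw: "at y within {y0..} = at y" if "y > y0" for y using that by (subst at_within_interior) auto
  have du: "(u has_real_derivative u1 y) (at y)" if "y > y0" for y
  proof -
    have "(u has_real_derivative u1 y) (at y within {y0..})" using u_d1 that by (auto)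
    then show ?thesis by (simp only: atw[OF that])
  qed
  have de: "(e has_real_derivative eta1 y) (at y)" if "y > y0" for y
  proof -
    have "(e has_real_derivative eta1 y) (at y within {y0..})" using eta_d1 that by (auto simp: e_def)
    then show ?thesis by (simp only: atw[OF that])
  qed
  have du1: "(u1 has_real_derivative u2 y) (at y)" if "y > y0" for y
  proof -
    have "(u1 has_real_derivative u2 y) (at y within {y0..})" using u_d2 that by (auto)
    then show ?thesis by (simp only: atw[OF that])
  qed
  have de1: "(eta1 has_real_derivative eta2 y) (at y)" if "y > y0" for y
  proof -
    have "(eta1 has_real_derivative eta2 y) (at y within {y0..})" using eta_d2 that by (auto)
    then show ?thesis by (simp only: atw[OF that])
  qed
  have dl: "(l has_real_derivative p y) (at y)" if "y > y0" for y
  proof -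
    have "((\<lambda>y. ln (u y) - ln (e y)) has_real_derivative (u1 y / u y - eta1 y / e y)) (at y)"
      using du[OF that] de[OF that] upos[of y] epos[of y] that
      by (auto intro!: derivative_eq_intros simp: field_simps)
    then show ?thesis by (simp add: l_def p_def)
  qed
  have dp: "(p has_real_derivative q y) (at y)" if "y > y0" for y
  proof -
    have "((\<lambda>y. u1 y / u y - eta1 y / e y) has_real_derivative q y) (at y)"
      using du[OF that] de[OF that] du1[OF that] de1[OF that] upos[of y] epos[of y] that
      by (auto intro!: derivative_eq_intros simp: q_def field_simps power2_eq_square)
    then show ?thesis by (simp add: p_def)
  qed
  have qform: "q y = G y * (be y * (p y)^2 - k y * p y + (w y - Ps y))" if "y \<ge> y0" for y
    unfolding q_def G_def be_def k_def p_def w_def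
  proof (rule alg)
    show "b y \<noteq> 0" "0 < u y" "0 < e y" using bnz upos epos that by auto
    show "0 = 1/2 * (b y)^2 * u2 y + aa y * u1 y + e y * u y - (u y)^2 - dd y * (u1 y)^2 / u y"
      using ode that by (simp add: aa_def dd_def e_def)
    show "Ps y = 1 + (1/2 * (b y)^2 * eta2 y + aa y * eta1 y) / (e y)^2 - dd y * (eta1 y)^2 / (e y)^3"
      by (simp add: Ps_def Psi_val_def)
  qed
  have lim1': "(k \<longlongrightarrow> K1) at_top" using lim1 by (simp add: k_def aa_def dd_def e_def)
  have lim2': "((\<lambda>y. dd y / e y) \<longlongrightarrow> K2) at_top" using lim2 by (simp add: dd_def e_def)
  have lim3': "((\<lambda>y. eta1 y / e y) \<longlongrightarrow> 0) at_top" using lim3 by (simp add: e_def)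
  have A3': "(Ps \<longlongrightarrow> 1) at_top" using A3 by (simp add: Ps_def aa_def dd_def e_def)
  have ddnn: "dd y / e y \<ge> 0" if "y \<ge> y0" for y
  proof -
    have "dd y \<ge> 0" using ccb[OF that] R_pos unfolding dd_eq
      by (intro mult_nonneg_nonneg) (auto simp: min_def split: if_splits)
    then show ?thesis using epos[OF that] by simp
  qed
  have "K2 \<ge> 0"
    by (rule tendsto_lowerbound[OF lim2']) (auto simp: eventually_at_top_linorder intro!: exI[of _ y0] ddnn)
  with K_nz have K2pos: "K2 > 0" by simp
  have h2: "K2/2 < K2" "K2 < 2*K2" using K2pos by auto
  have ev: "eventually (\<lambda>y. K2/2 < dd y / e y \<and> dd y / e y < 2*K2 \<and> \<bar>k y - K1\<bar> < 1 \<and> \<bar>Ps y - 1\<bar> < 1) at_top"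
    using order_tendstoD(1)[OF lim2' h2(1)] order_tendstoD(2)[OF lim2' h2(2)]
      tendstoD[OF lim1' zero_less_one] tendstoD[OF A3' zero_less_one]
    by eventually_elim (auto simp: dist_real_def)
  then obtain T1 where T1: "\<forall>y\<ge>T1. K2/2 < dd y / e y \<and> dd y / e y < 2*K2 \<and> \<bar>k y - K1\<bar> < 1 \<and> \<bar>Ps y - 1\<bar> < 1"
    by (auto simp: eventually_at_top_linorder)
  define T where "T = max T1 (y0 + 1)"
  define b0 where "b0 = K2 / (R + 2) * min R 1 / 2"
  define G1 where "G1 = 2 * (R + 2) / K2"
  define K where "K = \<bar>K1\<bar> + 1"
  define W where "W = C2 + 2"
  have b0pos: "b0 > 0" using K2pos R_pos by (simp add: b0_def)
  have KW: "K \<ge> 0" "W \<ge> 0" using C_pos by (auto simp: K_def W_def)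
  have Tp: "y > y0 \<and> G y > 0 \<and> G y \<le> G1 \<and> b0 \<le> be y \<and> be y \<le> 2 * K2 \<and> \<bar>k y\<bar> \<le> K \<and> \<bar>w y - Ps y\<bar> \<le> W"
    if "y \<ge> T" for y
  proof -
    have y: "y > y0" "y \<ge> y0" "y \<ge> T1" using that by (auto simp: T_def)
    have T1y: "K2/2 < dd y / e y" "dd y / e y < 2*K2" "\<bar>k y - K1\<bar> < 1" "\<bar>Ps y - 1\<bar> < 1"
      using T1 y by auto
    have mR: "min R 1 > 0" using R_pos by simp
    note cb = coeff_bounds[OF epos[OF y(2)] bnz[OF y(2)] _ _ R_pos mR K2pos T1y(1) dd_eq] ccb[OF y(2)]
    have "G y > 0" "G y \<le> G1" "b0 \<le> be y" "be y \<le> dd y / e y"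
      using cb by (auto simp: G_def G1_def b0_def be_def)
    moreover have "\<bar>k y\<bar> \<le> K" using T1y(3) by (simp add: K_def)
    moreover have "\<bar>w y - Ps y\<bar> \<le> W" using T1y(4) wb[OF y(2)] C_pos by (simp add: W_def abs_le_iff abs_less_iff)
    ultimately show ?thesis using y T1y by auto
  qed
  define P0 where "P0 = (K + W) / b0 + 1"
  have "(K + W) / b0 \<ge> 0" using KW b0pos by simp
  then have P0pos: "P0 > 0" by (simp add: P0_def)
  have qpos: "q y > 0" if "y \<ge> T" "\<bar>p y\<bar> \<ge> P0" for y
  proof -
    have "be y * (p y)^2 - k y * p y + (w y - Ps y) > 0"
      using Q_pos[of b0 "be y" "k y" K "w y - Ps y" W "p y"] Tp[OF that(1)] b0pos KW that(2)
      by (simp add: P0_def)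
    then show ?thesis using qform[of y] Tp[OF that(1)] by simp
  qed
  define Lq where "Lq = G1 * (2 * K2 * P0^2 + K * P0 + W)"
  have qbd: "\<bar>q y\<bar> \<le> Lq" if "y \<ge> T" "\<bar>p y\<bar> \<le> P0" for y
  proof -
    have "0 \<le> be y" using Tp[OF that(1)] b0pos by linarith
    moreover have "q y = G y * (be y * (p y)^2 - k y * p y + (w y - Ps y))"
      using qform[of y] Tp[OF that(1)] by simp
    ultimately show ?thesis unfolding Lq_def using Q_bound[of "G y" G1 "be y" K2 "k y" K "w y - Ps y" W "p y" P0]
      Tp[OF that(1)] that(2) by auto
  qed
  define D where "D = (ln C2 - ln C1) / P0 + 1"
  have lnC: "ln C1 \<le> ln C2" using C_pos by simp
  have Dpos: "D > 0" using lnC P0pos by (simp add: D_def add_nonneg_pos)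
  have DP: "D * P0 = (ln C2 - ln C1) + P0" using P0pos by (simp add: D_def field_simps)
  have pup: "p t < P0" if t: "t \<ge> T" for t
  proof (rule ccontr)
    assume "\<not> p t < P0"
    then have pt: "P0 \<le> p t" by simp
    define s where "s = t + D"
    have ty: "t > y0" using Tp[OF t] by simp
    have all: "P0 \<le> p x" if x: "x \<in> {t..s}" for x
    proof (rule trap_fwd[of t x p q P0])
      show "t \<le> x" using x by simp
      show "\<forall>x'\<in>{t..x}. (p has_real_derivative q x') (at x')" using dp ty by auto
      show "P0 \<le> p t" by (rule pt)
      show "\<forall>x'\<in>{t..x}. P0 \<le> p x' \<longrightarrow> 0 < q x'"
        using qpos t P0pos by auto
    qed
    obtain xi where xi: "t < xi" "xi < s" "l s - l t = (s - t) * p xi"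
      using MVT2[of t s l p] dl ty Dpos by (auto simp: s_def)
    have "(s - t) * P0 \<le> (s - t) * p xi" using all[of xi] xi by (intro mult_left_mono) auto
    then have "l s - l t \<ge> D * P0" using xi by (simp add: s_def)
    moreover have "l s - l t \<le> ln C2 - ln C1" using lbd[of s] lbd[of t] ty Dpos by (auto simp: s_def)
    ultimately show False using DP P0pos by linarith
  qed
  have plo: "- P0 < p t" if t: "t \<ge> T + D" for t
  proof (rule ccontr)
    assume "\<not> - P0 < p t"
    then have pt: "p t \<le> - P0" by simp
    have Ty: "T > y0" using Tp[of T] by simp
    have all: "p x \<le> - P0" if x: "x \<in> {T..t}" for x
    proof (rule trap_bwd[of x t p q "- P0"])
      show "x \<le> t" using x by simp
      show "\<forall>x'\<in>{x..t}. (p has_real_derivative q x') (at x')" using dp Ty x by auto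
      show "p t \<le> - P0" by (rule pt)
      show "\<forall>x'\<in>{x..t}. p x' \<le> - P0 \<longrightarrow> 0 < q x'"
        using qpos x P0pos by fastforce
    qed
    obtain xi where xi: "T < xi" "xi < t" "l t - l T = (t - T) * p xi"
      using MVT2[of T t l p] dl Ty Dpos t by auto
    have "(t - T) * p xi \<le> (t - T) * (- P0)" using all[of xi] xi by (intro mult_left_mono) auto
    then have "l t - l T \<le> - ((t - T) * P0)" using xi by simp
    moreover have "D * P0 \<le> (t - T) * P0" using t P0pos by (intro mult_right_mono) auto
    moreover have "l t - l T \<ge> ln C1 - ln C2" using lbd[of t] lbd[of T] Ty t Dpos by auto
    ultimately show False using DP P0pos by linarith
  qed
  have quasi: "\<forall>\<epsilon>>0. \<exists>T. \<forall>a x b. T \<le> a \<longrightarrow> a < x \<longrightarrow> x < b \<longrightarrow>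
        w x \<le> max (w a) (max (w b) (1 + \<epsilon>)) \<and> min (w a) (min (w b) (1 - \<epsilon>)) \<le> w x"
  proof (intro allI impI)
    fix \<epsilon> :: real assume "\<epsilon> > 0"
    then obtain Te where Te: "\<forall>y\<ge>Te. \<bar>Ps y - 1\<bar> < \<epsilon>"
      using tendstoD[OF A3', of \<epsilon>] by (auto simp: eventually_at_top_linorder dist_real_def)
    show "\<exists>T. \<forall>a x b. T \<le> a \<longrightarrow> a < x \<longrightarrow> x < b \<longrightarrow>
        w x \<le> max (w a) (max (w b) (1 + \<epsilon>)) \<and> min (w a) (min (w b) (1 - \<epsilon>)) \<le> w x"
    proof (intro exI[of _ "max Te T"] allI impI)
      fix a x b assume a: "max Te T \<le> a" and ax: "a < x" and xb: "x < b"
      have aT: "a \<ge> T" "a \<ge> Te" using a by auto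
      have ay: "a > y0" using Tp[OF aT(1)] by simp
      have dlab: "\<forall>x\<in>{a..b}. (l has_real_derivative p x) (at x)" using dl ay by auto
      have dpab: "\<forall>x\<in>{a..b}. (p has_real_derivative q x) (at x)" using dp ay by auto
      have cont: "continuous_on {a..b} w"
      proof -
        have "\<forall>x\<in>{a..b}. isCont w x"
        proof
          fix x assume "x \<in> {a..b}"
          then have xy: "x > y0" using ay by auto
          have "isCont u x" "isCont e x" using du[OF xy] de[OF xy] by (auto intro: DERIV_isCont)
          then show "isCont w x" unfolding w_def using epos[of x] xy by (auto intro!: continuous_intros)
        qed
        then show ?thesis by (rule continuous_at_imp_continuous_on)
      qed
      have lw_iff: "l y \<le> l z \<longleftrightarrow> w y \<le> w z" if "y \<in> {a..b}" "z \<in> {a..b}" for y z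
        using that ay lw[of y] lw[of z] wb[of y] wb[of z] C_pos by auto
      have qz: "q z = G z * (w z - Ps z)" if "z \<in> {a..b}" "p z = 0" for z
        using qform[of z] that ay by simp
      have Gz: "G z > 0" "\<bar>Ps z - 1\<bar> < \<epsilon>" if "z \<in> {a..b}" for z
        using Tp[of z] Te aT that by auto
      obtain zM where zM: "zM \<in> {a..b}" "\<forall>y\<in>{a..b}. w y \<le> w zM"
        using continuous_attains_sup[OF compact_Icc _ cont] ax xb by auto
      obtain zm where zm: "zm \<in> {a..b}" "\<forall>y\<in>{a..b}. w zm \<le> w y"
        using continuous_attains_inf[OF compact_Icc _ cont] ax xb by auto
      have up: "w x \<le> max (w a) (max (w b) (1 + \<epsilon>))"
      proof (cases "zM = a \<or> zM = b")
        case True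
        have "w x \<le> w zM" using zM ax xb by auto
        then show ?thesis using True by (auto simp: le_max_iff_disj)
      next
        case False
        then have int: "a < zM" "zM < b" using zM by auto
        have "\<forall>y\<in>{a..b}. l y \<le> l zM" using zM lw_iff by auto
        from int_max[OF int dlab dpab this] have "p zM = 0" "q zM \<le> 0" by auto
        then have "G zM * (w zM - Ps zM) \<le> 0" using qz zM by auto
        then have "w zM \<le> Ps zM" using Gz[OF zM(1)] by (simp add: mult_le_0_iff)
        then have "w zM < 1 + \<epsilon>" using Gz[OF zM(1)] by linarith
        moreover have "w x \<le> w zM" using zM ax xb by auto
        ultimately show ?thesis by (auto simp: le_max_iff_disj)
      qed
      have dn: "min (w a) (min (w b) (1 - \<epsilon>)) \<le> w x"
      proof (cases "zm = a \<or> zm = b")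
        case True
        have "w zm \<le> w x" using zm ax xb by auto
        then show ?thesis using True by (auto simp: min_le_iff_disj)
      next
        case False
        then have int: "a < zm" "zm < b" using zm by auto
        have "\<forall>y\<in>{a..b}. l zm \<le> l y" using zm lw_iff by auto
        from int_min[OF int dlab dpab this] have "p zm = 0" "q zm \<ge> 0" by auto
        then have "G zm * (w zm - Ps zm) \<ge> 0" using qz zm by auto
        then have "w zm \<ge> Ps zm" using Gz[OF zm(1)] by (simp add: zero_le_mult_iff)
        then have "w zm > 1 - \<epsilon>" using Gz[OF zm(1)] by linarith
        moreover have "w zm \<le> w x" using zm ax xb by auto
        ultimately show ?thesis by (auto simp: min_le_iff_disj)
      qed
      show "w x \<le> max (w a) (max (w b) (1 + \<epsilon>)) \<and> min (w a) (min (w b) (1 - \<epsilon>)) \<le> w x"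
        using up dn by simp
    qed
  qed
  obtain L where L: "(w \<longlongrightarrow> L) at_top"
    using osc_conv[of y0 C1 w C2] wb quasi by blast
  have "C1 \<le> L"
    by (rule tendsto_lowerbound[OF L]) (auto simp: eventually_at_top_linorder intro!: exI[of _ y0] dest: wb)
  then have Lpos: "L > 0" using C_pos by simp
  have "((\<lambda>y. ln (w y)) \<longlongrightarrow> ln L) at_top" using L Lpos by (intro tendsto_ln) auto
  moreover have "eventually (\<lambda>y. ln (w y) = l y) at_top"
    by (auto simp: eventually_at_top_linorder intro!: exI[of _ y0] lw[symmetric])
  ultimately have llim: "(l \<longlongrightarrow> ln L) at_top" by (rule Lim_transform_eventually)
  have p0: "(p \<longlongrightarrow> 0) at_top"
  proof (rule barbalat[of "T + D" l p q Lq "ln L"])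
    have TD: "T + D > y0" using Tp[of T] Dpos by simp
    show "\<forall>x\<ge>T + D. (l has_real_derivative p x) (at x)" using dl TD by auto
    show "\<forall>x\<ge>T + D. (p has_real_derivative q x) (at x)" using dp TD by auto
    show "\<forall>x\<ge>T + D. \<bar>q x\<bar> \<le> Lq"
    proof (intro allI impI)
      fix x assume x: "x \<ge> T + D"
      have "\<bar>p x\<bar> \<le> P0" using pup[of x] plo[OF x] x Dpos by auto
      then show "\<bar>q x\<bar> \<le> Lq" using qbd[of x] x Dpos by auto
    qed
    show "(l \<longlongrightarrow> ln L) at_top" by (rule llim)
  qed
  have "((\<lambda>y. p y + eta1 y / e y) \<longlongrightarrow> 0 + 0) at_top" by (intro tendsto_add p0 lim3')
  then show ?thesis by (simp add: p_def)
qed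

end
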